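(* For every constant $\epsilon<1$ the following holds. There is no pair of maps $g_r,g_c$, where $g_r$ assigns to each row payoff matrix $R$ (entries in $[0,1]$) a mixed strategy over rows and $g_c$ assigns to each pair $(R,C)$ of payoff matrices a mixed strategy over columns, such that for every bimatrix game $(R,C)$ the profile $(g_r(R),g_c(R,C))$ is an $\epsilon$-well-supported Nash equilibrium. In other words, with unlimited one-way communication (from the row player to the column player) it is impossible to guarantee an $\epsilon$-well-supported Nash equilibrium for any constant $\epsilon<1$.
   Context: A bimatrix game $(R,C)$ has payoff matrices with entries in $[0,1]$; mixed strategies $\mathbf{x},\mathbf{y}$ are probability vectors over rows and columns. For a mixed strategy $\mathbf{y}$ of the column player, row $i$ is an $\epsilon$-best response if $\mathbf{e}_i^TR\mathbf{y}\ge\mathbf{e}_{i'}^TR\mathbf{y}-\epsilon$ for all rows $i'$; similarly for the column player with $C$. $(\mathbf{x},\mathbf{y})$ is an $\epsilon$-well-supported Nash equilibrium if every pure strategy in the support of $\mathbf{x}$ is an $\epsilon$-best response to $\mathbf{y}$ and every pure strategy in the support of $\mathbf{y}$ is an $\epsilon$-best response to $\mathbf{x}$. In one-way communication only the row player sends information, so his output depends only on $R$. *)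

theory Defs
  imports Complex_Main
begin

text \<open>A bimatrix game with n rows and m columns: payoff matrices are functions
  nat \<Rightarrow> nat \<Rightarrow> real, meaningful on indices i < n, j < m.\<close>

definition payoff_matrix :: "nat \<Rightarrow> nat \<Rightarrow> (nat \<Rightarrow> nat \<Rightarrow> real) \<Rightarrow> bool" where
  "payoff_matrix n m A \<longleftrightarrow> (\<forall>i<n. \<forall>j<m. 0 \<le> A i j \<and> A i j \<le> 1)"

definition mixed_strategy :: "nat \<Rightarrow> (nat \<Rightarrow> real) \<Rightarrow> bool" where
  "mixed_strategy n x \<longleftrightarrow> (\<forall>i<n. 0 \<le> x i) \<and> (\<Sum>i<n. x i) = 1"

definition row_payoff :: "nat \<Rightarrow> (nat \<Rightarrow> nat \<Rightarrow> real) \<Rightarrow> (nat \<Rightarrow> real) \<Rightarrow> nat \<Rightarrow> real" where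
  "row_payoff m R y i = (\<Sum>j<m. R i j * y j)"

definition col_payoff :: "nat \<Rightarrow> (nat \<Rightarrow> nat \<Rightarrow> real) \<Rightarrow> (nat \<Rightarrow> real) \<Rightarrow> nat \<Rightarrow> real" where
  "col_payoff n C x j = (\<Sum>i<n. x i * C i j)"

definition eps_WSNE :: "real \<Rightarrow> nat \<Rightarrow> nat \<Rightarrow> (nat \<Rightarrow> nat \<Rightarrow> real) \<Rightarrow> (nat \<Rightarrow> nat \<Rightarrow> real)
    \<Rightarrow> (nat \<Rightarrow> real) \<Rightarrow> (nat \<Rightarrow> real) \<Rightarrow> bool" where
  "eps_WSNE \<epsilon> n m R C x y \<longleftrightarrow>
     mixed_strategy n x \<and> mixed_strategy m y \<and>
     (\<forall>i<n. x i > 0 \<longrightarrow> (\<forall>i'<n. row_payoff m R y i \<ge> row_payoff m R y i' - \<epsilon>)) \<and>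
     (\<forall>j<m. y j > 0 \<longrightarrow> (\<forall>j'<m. col_payoff n C x j \<ge> col_payoff n C x j' - \<epsilon>))"

end

theory Submission
  imports Defs
begin

lemma sum2: "(\<Sum>i<(2::nat). f i) = (f 0 + f 1 :: real)"
  by (simp add: numeral_2_eq_2)

lemma key:
  fixes \<epsilon> :: real and a :: nat
  assumes e: "\<epsilon> < 1" and a: "a < 2"
    and x0: "x a > 0"
    and W: "eps_WSNE \<epsilon> 2 2 (\<lambda>i j. if i = j then 1 else 0) (\<lambda>k j. if j = 1 - a then 1 else 0) x y"
  shows False
proof -
  let ?b = "1 - a"
  have b: "?b < 2" "?b \<noteq> a" using a by arith+
  from W have my: "mixed_strategy 2 y"
    and rowc: "\<forall>i<2. x i > 0 \<longrightarrow> (\<forall>i'<2. row_payoff 2 (\<lambda>i j. if i = j then 1 else 0) y i \<ge> row_payoff 2 (\<lambda>i j. if i = j then 1 else 0) y i' - \<epsilon>)"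
    and colc: "\<forall>j<2. y j > 0 \<longrightarrow> (\<forall>j'<2. col_payoff 2 (\<lambda>k j. if j = 1 - a then 1 else 0) x j \<ge> col_payoff 2 (\<lambda>k j. if j = 1 - a then 1 else 0) x j' - \<epsilon>)"
    and mx: "mixed_strategy 2 x"
    unfolding eps_WSNE_def by auto
  have sx: "x 0 + x 1 = 1" and sy: "y 0 + y 1 = 1" "y 0 \<ge> 0" "y 1 \<ge> 0"
    using mx my unfolding mixed_strategy_def by (auto simp: sum2)
  have cp: "col_payoff 2 (\<lambda>k j. if j = 1 - a then 1 else 0) x j = (if j = ?b then 1 else 0)" for j
    unfolding col_payoff_def using sx by (auto simp: sum2)
  have ya: "y a = 0"
  proof (rule ccontr)
    assume "y a \<noteq> 0"
    hence "y a > 0" using sy a by (cases a; cases "a - 1") auto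
    with colc a b have "col_payoff 2 (\<lambda>k j. if j = 1 - a then 1 else 0) x a \<ge> col_payoff 2 (\<lambda>k j. if j = 1 - a then 1 else 0) x ?b - \<epsilon>"
      by blast
    with cp b e show False by simp
  qed
  have yb: "y ?b = 1" using ya sy a by (cases a; cases "a - 1") auto
  have rp: "row_payoff 2 (\<lambda>i j. if i = j then 1 else 0) y i = (if i < 2 then y i else 0)" for i
    unfolding row_payoff_def by (cases i; cases "i - 1") (auto simp: sum2)
  from rowc a x0 b have "row_payoff 2 (\<lambda>i j. if i = j then 1 else 0) y a \<ge> row_payoff 2 (\<lambda>i j. if i = j then 1 else 0) y ?b - \<epsilon>"
    by blast
  with rp a b ya yb e show False by simp
qed

theorem theorem4:
  fixes \<epsilon> :: real
  assumes "\<epsilon> < 1"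
  shows "\<not> (\<exists>(g_r :: nat \<Rightarrow> nat \<Rightarrow> (nat \<Rightarrow> nat \<Rightarrow> real) \<Rightarrow> (nat \<Rightarrow> real))
               (g_c :: nat \<Rightarrow> nat \<Rightarrow> (nat \<Rightarrow> nat \<Rightarrow> real) \<Rightarrow> (nat \<Rightarrow> nat \<Rightarrow> real) \<Rightarrow> (nat \<Rightarrow> real)).
            \<forall>n m R C. 1 \<le> n \<longrightarrow> 1 \<le> m \<longrightarrow> payoff_matrix n m R \<longrightarrow> payoff_matrix n m C \<longrightarrow>
              eps_WSNE \<epsilon> n m R C (g_r n m R) (g_c n m R C))"
proof
  assume "\<exists>g_r g_c. \<forall>n m R C. 1 \<le> n \<longrightarrow> 1 \<le> m \<longrightarrow> payoff_matrix n m R \<longrightarrow> payoff_matrix n m C \<longrightarrow>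
              eps_WSNE \<epsilon> n m R C (g_r n m R) (g_c n m R C)"
  then obtain g_r :: "nat \<Rightarrow> nat \<Rightarrow> (nat \<Rightarrow> nat \<Rightarrow> real) \<Rightarrow> (nat \<Rightarrow> real)" and
     g_c :: "nat \<Rightarrow> nat \<Rightarrow> (nat \<Rightarrow> nat \<Rightarrow> real) \<Rightarrow> (nat \<Rightarrow> nat \<Rightarrow> real) \<Rightarrow> (nat \<Rightarrow> real)"
    where G: "\<And>n m R C. 1 \<le> n \<Longrightarrow> 1 \<le> m \<Longrightarrow> payoff_matrix n m R \<Longrightarrow> payoff_matrix n m C \<Longrightarrow>
              eps_WSNE \<epsilon> n m R C (g_r n m R) (g_c n m R C)" by blast
  define R :: "nat \<Rightarrow> nat \<Rightarrow> real" where "R = (\<lambda>i j. if i = j then 1 else 0)"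
  define x where "x = g_r 2 2 R"
  have pR: "payoff_matrix 2 2 R" unfolding payoff_matrix_def R_def by auto
  have pC: "payoff_matrix 2 2 (\<lambda>k j. if j = 1 - a then 1 else 0)" for a :: nat
    unfolding payoff_matrix_def by auto
  have W: "eps_WSNE \<epsilon> 2 2 R (\<lambda>k j. if j = 1 - a then 1 else 0) x (g_c 2 2 R (\<lambda>k j. if j = 1 - a then 1 else 0))" for a :: nat
    using G[OF _ _ pR pC] unfolding x_def by simp
  have "x 0 + x 1 = 1" "x 0 \<ge> 0" "x 1 \<ge> 0"
    using W[of 0] unfolding eps_WSNE_def mixed_strategy_def by (auto simp: sum2)
  hence "x 0 > 0 \<or> x 1 > 0" by linarith
  thus False
  proof
    assume "x 0 > 0" thus False using key[OF assms _ _ W[of 0, unfolded R_def]] by simp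
  next
    assume "x 1 > 0" thus False using key[OF assms _ _ W[of 1, unfolded R_def]] by simp
  qed
qed

end
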